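(* Let $\Pi\in\boldsymbol{\Pi}_{q,r}$ and $W\in\mathbb{R}^{q\times p}$ with $W$ of full column rank, and assume $\mathcal{Z}_r^+(\Pi)\neq\emptyset$. Define $\Pi_W:=\begin{bmatrix}W^\top\Pi_{11}W&W^\top\Pi_{12}\\ \Pi_{21}W&\Pi_{22}\end{bmatrix}\in\mathbb{S}^{p+r}$. Then $\mathcal{Z}_r^+(\Pi)W=\mathcal{Z}_r^+(\Pi_W)$.
   Context: $\mathbb{S}^k$ denotes the real symmetric $k\times k$ matrices; for symmetric matrices, $A\ge 0$ ($A>0$) means positive semidefinite (definite). $A^\dagger$ is the Moore–Penrose pseudo-inverse. Any $\Pi\in\mathbb{S}^{q+r}$ is partitioned as $\Pi=\begin{bmatrix}\Pi_{11}&\Pi_{12}\\ \Pi_{21}&\Pi_{22}\end{bmatrix}$ with $\Pi_{11}\in\mathbb{S}^q$, $\Pi_{22}\in\mathbb{S}^r$. The generalized Schur complement is $\Pi\mid\Pi_{22}:=\Pi_{11}-\Pi_{12}\Pi_{22}^\dagger\Pi_{21}$. The set $\boldsymbol{\Pi}_{q,r}$ consists of all $\Pi\in\mathbb{S}^{q+r}$ with $\Pi_{22}\le 0$, $\Pi\mid\Pi_{22}\ge 0$ and $\ker\Pi_{22}\subseteq\ker\Pi_{12}$. Define $\mathcal{Z}_r^+(\Pi)=\{Z\in\mathbb{R}^{r\times q}:\begin{bmatrix}I_q\\ Z\end{bmatrix}^\top\Pi\begin{bmatrix}I_q\\ Z\end{bmatrix}> 0\}$ (analogously $\mathcal{Z}_r^+(\Pi_W)\subseteq\mathbb{R}^{r\times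 p}$ using $I_p$). For $\mathcal{S}\subseteq\mathbb{R}^{r\times q}$, $\mathcal{S}W:=\{SW:S\in\mathcal{S}\}$. *)

theory Defs
  imports "HOL-Analysis.Analysis"
begin

definition sym_mat :: "real^'n^'n \<Rightarrow> bool" where
  "sym_mat A \<longleftrightarrow> transpose A = A"

definition psd :: "real^'n^'n \<Rightarrow> bool" where
  "psd A \<longleftrightarrow> sym_mat A \<and> (\<forall>x. 0 \<le> x \<bullet> (A *v x))"

definition pd :: "real^'n^'n \<Rightarrow> bool" where
  "pd A \<longleftrightarrow> sym_mat A \<and> (\<forall>x. x \<noteq> 0 \<longrightarrow> 0 < x \<bullet> (A *v x))"

definition nsd :: "real^'n^'n \<Rightarrow> bool" where
  "nsd A \<longleftrightarrow> psd (- A)"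

definition pinv :: "real^'n^'m \<Rightarrow> real^'m^'n" where
  "pinv A = (THE X. A ** X ** A = A \<and> X ** A ** X = X \<and>
                    transpose (A ** X) = A ** X \<and> transpose (X ** A) = X ** A)"

definition blk11 :: "real^('q::finite + 'r::finite)^('q + 'r) \<Rightarrow> real^'q^'q" where
  "blk11 P = (\<chi> i j. P $ Inl i $ Inl j)"
definition blk12 :: "real^('q::finite + 'r::finite)^('q + 'r) \<Rightarrow> real^'r^'q" where
  "blk12 P = (\<chi> i j. P $ Inl i $ Inr j)"
definition blk21 :: "real^('q::finite + 'r::finite)^('q + 'r) \<Rightarrow> real^'q^'r" where
  "blk21 P = (\<chi> i j. P $ Inr i $ Inl j)"
definition blk22 :: "real^('q::finite + 'r::finite)^('q + 'r) \<Rightarrow> real^'r^'r" where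
  "blk22 P = (\<chi> i j. P $ Inr i $ Inr j)"

definition blockmat :: "real^'q^'q \<Rightarrow> real^'r^'q \<Rightarrow> real^'q^'r \<Rightarrow> real^'r^'r
    \<Rightarrow> real^('q::finite + 'r::finite)^('q + 'r)" where
  "blockmat A B C D = (\<chi> k l. case k of
       Inl i \<Rightarrow> (case l of Inl j \<Rightarrow> A $ i $ j | Inr j \<Rightarrow> B $ i $ j)
     | Inr i \<Rightarrow> (case l of Inl j \<Rightarrow> C $ i $ j | Inr j \<Rightarrow> D $ i $ j))"

definition schur22 :: "real^('q::finite + 'r::finite)^('q + 'r) \<Rightarrow> real^'q^'q" where
  "schur22 P = blk11 P - blk12 P ** pinv (blk22 P) ** blk21 P"

definition PiSet :: "(real^('q::finite + 'r::finite)^('q + 'r)) set" where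
  "PiSet = {P. sym_mat P \<and> nsd (blk22 P) \<and> psd (schur22 P) \<and>
               (\<forall>v. blk22 P *v v = 0 \<longrightarrow> blk12 P *v v = 0)}"

definition stackI :: "real^'q^'r \<Rightarrow> real^'q^('q::finite + 'r::finite)" where
  "stackI Z = (\<chi> k j. case k of Inl i \<Rightarrow> (if i = j then 1 else 0) | Inr i \<Rightarrow> Z $ i $ j)"

definition Zplus :: "real^('q::finite + 'r::finite)^('q + 'r) \<Rightarrow> (real^'q^'r) set" where
  "Zplus P = {Z. pd (transpose (stackI Z) ** P ** stackI Z)}"

end

theory Submission
  imports Defs
begin

definition qf :: "real^'q^'q \<Rightarrow> real^'r^'q \<Rightarrow> real^'q^'r \<Rightarrow> real^'r^'r \<Rightarrow> real^'q \<Rightarrow> real^'r \<Rightarrow> real" where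
  "qf A B C D x z = x \<bullet> (A *v x) + x \<bullet> (B *v z) + z \<bullet> (C *v x) + z \<bullet> (D *v z)"

lemma sum_UNIV_Plus:
  "sum f (UNIV :: ('a::finite + 'b::finite) set) = sum (f \<circ> Inl) UNIV + sum (f \<circ> Inr) UNIV"
  by (metis UNIV_Plus_UNIV finite sum.Plus)

lemma inner_transp: "x \<bullet> (M *v y) = y \<bullet> (transpose M *v (x::real^_))"
  by (metis dot_lmul_matrix inner_commute transpose_matrix_vector)

lemma stackI_Inl: "(stackI Z *v x) $ Inl i = x $ i"
proof -
  have "(stackI Z *v x) $ Inl i = (\<Sum>j\<in>UNIV. (if i = j then 1 else 0) * x $ j)"
    unfolding stackI_def matrix_vector_mult_def by simp
  also have "\<dots> = (\<Sum>j\<in>UNIV. (if i = j then x $ j else 0))"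
    by (rule sum.cong) auto
  finally show ?thesis by simp
qed

lemma stackI_Inr: "(stackI Z *v x) $ Inr i = (Z *v x) $ i"
  unfolding stackI_def matrix_vector_mult_def by simp

lemma quad_join:
  fixes M :: "real^('q::finite + 'r::finite)^('q + 'r)"
  assumes "\<And>i. s $ Inl i = x $ i" "\<And>i. s $ Inr i = y $ i"
  shows "s \<bullet> (M *v s) = qf (blk11 M) (blk12 M) (blk21 M) (blk22 M) x y"
    unfolding qf_def inner_vec_def matrix_vector_mult_def blk11_def blk12_def blk21_def blk22_def
    by (simp add: sum_UNIV_Plus o_def assms sum_distrib_left sum.distrib algebra_simps)

lemma quad_stack:
  fixes M :: "real^('q::finite + 'r::finite)^('q + 'r)"
  shows "x \<bullet> ((transpose (stackI Z) ** M ** stackI Z) *v x)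
     = qf (blk11 M) (blk12 M) (blk21 M) (blk22 M) x (Z *v x)"
proof -
  have "x \<bullet> ((transpose (stackI Z) ** M ** stackI Z) *v x) = (stackI Z *v x) \<bullet> (M *v (stackI Z *v x))"
    by (metis inner_transp matrix_vector_mul_assoc transpose_transpose inner_commute)
  also have "\<dots> = qf (blk11 M) (blk12 M) (blk21 M) (blk22 M) x (Z *v x)"
    by (rule quad_join) (simp_all add: stackI_Inl stackI_Inr)
  finally show ?thesis .
qed


lemma qf_expand:
  assumes tA: "transpose A = A" and tB: "transpose B = C" and tD: "transpose D = D" and DK: "D ** K = C"
  shows "qf A B C D (a + v) (b - K *v v) = qf A B C D a b + v \<bullet> ((A - B ** K) *v v) + 2 * (a \<bullet> ((A - B ** K) *v v))"
proof -
  have DKv: "D *v (K *v w) = C *v w" for w by (simp add: matrix_vector_mul_assoc DK)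
  have BK: "(B ** K) *v w = B *v (K *v w)" for w by (simp add: matrix_vector_mul_assoc)
  have f1: "v \<bullet> (A *v a) = a \<bullet> (A *v v)" by (metis inner_transp tA)
  have f2: "v \<bullet> (B *v b) = b \<bullet> (C *v v)" by (metis inner_transp tB)
  have f3: "(K *v v) \<bullet> (C *v a) = a \<bullet> (B *v (K *v v))" by (metis inner_transp tB transpose_transpose)
  have f4: "(K *v v) \<bullet> (D *v b) = b \<bullet> (C *v v)" by (metis inner_transp tD DKv)
  have f5: "v \<bullet> (B *v (K *v v)) = (K *v v) \<bullet> (C *v v)" by (metis inner_transp tB)
  show ?thesis
    unfolding qf_def
    by (simp add: inner_add_left inner_add_right inner_diff_left inner_diff_right
        matrix_vector_right_distrib matrix_vector_mult_diff_distrib matrix_vector_mult_diff_rdistrib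
        BK DKv f1 f2 f3 f4 f5)
qed

lemma exists_K:
  fixes D :: "real^'r::finite^'r" and C :: "real^'q::finite^'r"
  assumes tD: "transpose D = D" and ker: "\<And>v. D *v v = 0 \<Longrightarrow> transpose C *v v = 0"
  shows "\<exists>K. D ** K = C"
proof -
  let ?f = "(*v) D"
  have lin: "linear ?f" by (rule matrix_vector_mul_linear)
  have adj: "adjoint ?f = ?f" using adjoint_matrix[of D] tD by simp
  have kr: "?f -` {0} = (range ?f)\<^sup>\<bottom>"
    using ker_orthogonal_comp_adjoint[OF lin] adj by simp
  have sub: "subspace (range ?f)"
    by (rule linear_subspace_image[OF lin subspace_UNIV])
  have rng: "(?f -` {0})\<^sup>\<bottom> = range ?f"
    using kr orthogonal_comp_self[OF sub] by simp
  have "\<exists>y. D *v y = C *v w" for w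
  proof -
    have o: "v \<bullet> (C *v w) = 0" if "D *v v = 0" for v
    proof -
      have "transpose C *v v = 0" using that by (rule ker)
      then show ?thesis by (metis inner_transp inner_zero_right)
    qed
    have "C *v w \<in> (?f -` {0})\<^sup>\<bottom>"
      unfolding orthogonal_comp_def orthogonal_def using o by auto
    then show ?thesis using rng by auto
  qed
  then obtain g where g: "\<And>w. D *v g w = C *v w" by metis
  define K :: "real^'q^'r" where "K = (\<chi> i j. g (axis j 1) $ i)"
  have "(D ** K) $ i $ j = C $ i $ j" for i j
  proof -
    have "(D ** K) $ i $ j = (D *v g (axis j 1)) $ i"
      by (simp add: K_def matrix_matrix_mult_def matrix_vector_mult_def)
    also have "\<dots> = (C *v axis j 1) $ i" by (simp add: g)
    also have "\<dots> = C $ i $ j" by (simp add: matrix_vector_mult_basis column_def)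
    finally show ?thesis .
  qed
  then show ?thesis by (auto simp: vec_eq_iff)
qed

lemma transp_eq_iff: "transpose X = Y \<longleftrightarrow> (\<forall>i j. X $ j $ i = Y $ i $ j)"
  by (auto simp: transpose_def vec_eq_iff)

lemma blocks_sym:
  fixes P :: "real^('q::finite + 'r::finite)^('q + 'r)"
  assumes "sym_mat P"
  shows "transpose (blk11 P) = blk11 P" "transpose (blk12 P) = blk21 P" "transpose (blk22 P) = blk22 P"
proof -
  have s: "P $ k $ l = P $ l $ k" for k l
    using assms unfolding sym_mat_def transp_eq_iff by metis
  show "transpose (blk11 P) = blk11 P" "transpose (blk12 P) = blk21 P" "transpose (blk22 P) = blk22 P"
    unfolding transp_eq_iff blk11_def blk12_def blk21_def blk22_def by (simp_all add: s)
qed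

lemma blk_blockmat:
  "blk11 (blockmat A B C D) = A" "blk12 (blockmat A B C D) = B"
  "blk21 (blockmat A B C D) = C" "blk22 (blockmat A B C D) = D"
  by (simp_all add: blk11_def blk12_def blk21_def blk22_def blockmat_def vec_eq_iff)

lemma sym_blockmat:
  assumes "transpose A = A" "transpose B = C" "transpose D = D"
  shows "sym_mat (blockmat A B C D)"
  using assms unfolding sym_mat_def transp_eq_iff blockmat_def
  by (auto split: sum.splits)

lemma sym_congr:
  assumes "sym_mat M"
  shows "sym_mat (transpose S ** M ** S)"
  using assms unfolding sym_mat_def by (simp add: matrix_transpose_mul matrix_mul_assoc)

lemma Zplus_iff:
  fixes M :: "real^('q::finite + 'r::finite)^('q + 'r)"
  assumes "sym_mat M"
  shows "Z \<in> Zplus M \<longleftrightarrow> (\<forall>x. x \<noteq> 0 \<longrightarrow> 0 < qf (blk11 M) (blk12 M) (blk21 M) (blk22 M) x (Z *v x))"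
  unfolding Zplus_def pd_def using sym_congr[OF assms, of "stackI Z"] by (simp add: quad_stack)

lemma tw: "u \<bullet> (transpose W *v w) = (W *v u) \<bullet> (w::real^_)"
  by (metis inner_transp transpose_transpose inner_commute)

lemma tw2: "u \<bullet> (w v* W) = (W *v u) \<bullet> (w::real^_)"
  by (metis tw transpose_matrix_vector)

lemma qf_W:
  "qf (transpose W ** A ** W) (transpose W ** B) (C ** W) D u y = qf A B C D (W *v u) y"
  unfolding qf_def
  by (simp add: matrix_vector_mul_assoc[symmetric] tw2 inner_commute)

lemma neg_mv: "(- D) *v d = - (D *v (d::real^_))"
  by (simp add: matrix_vector_mult_def vec_eq_iff sum_negf)

theorem mainTheorem4:
  fixes P :: "real^('q::finite + 'r::finite)^('q + 'r)"
    and W :: "real^'p::finite^'q"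
  assumes "P \<in> PiSet"
    and "rank W = CARD('p)"
    and "Zplus P \<noteq> {}"
  shows "(\<lambda>Z. Z ** W) ` Zplus P
       = Zplus (blockmat (transpose W ** blk11 P ** W) (transpose W ** blk12 P)
                         (blk21 P ** W) (blk22 P))"
proof -
  define A where "A = blk11 P"
  define B where "B = blk12 P"
  define C where "C = blk21 P"
  define D where "D = blk22 P"
  define PW where "PW = blockmat (transpose W ** A ** W) (transpose W ** B) (C ** W) D"
  have symP: "sym_mat P" and nsdD: "nsd D" and kerB: "\<And>v. D *v v = 0 \<Longrightarrow> B *v v = 0"
    using assms(1) unfolding PiSet_def A_def B_def C_def D_def by auto
  have tA: "transpose A = A" and tB: "transpose B = C" and tD: "transpose D = D"
    using blocks_sym[OF symP] unfolding A_def B_def C_def D_def by auto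
  have tC: "transpose C = B" using tB by (metis transpose_transpose)
  have symPW: "sym_mat PW"
    unfolding PW_def
    by (rule sym_blockmat) (simp_all add: matrix_transpose_mul matrix_mul_assoc tA tB tD)
  have ZP: "Z \<in> Zplus P \<longleftrightarrow> (\<forall>x. x \<noteq> 0 \<longrightarrow> 0 < qf A B C D x (Z *v x))" for Z
    using Zplus_iff[OF symP] unfolding A_def B_def C_def D_def by simp
  have ZPW: "Y \<in> Zplus PW \<longleftrightarrow> (\<forall>u. u \<noteq> 0 \<longrightarrow> 0 < qf A B C D (W *v u) (Y *v u))" for Y
    using Zplus_iff[OF symPW] unfolding PW_def blk_blockmat qf_W by simp
  have injW: "W *v u = 0 \<Longrightarrow> u = 0" for u
    using assms(2) unfolding full_rank_injective
    by (metis injD matrix_vector_mult_0_right)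
  obtain K where DK: "D ** K = C"
    using exists_K[OF tD] kerB tC by metis
  define S where "S = A - B ** K"
  have expand: "qf A B C D (a + v) (b - K *v v) = qf A B C D a b + v \<bullet> (S *v v) + 2 * (a \<bullet> (S *v v))" for a v b
    unfolding S_def by (rule qf_expand[OF tA tB tD DK])
  obtain Z0 where Z0: "Z0 \<in> Zplus P" using assms(3) by auto
  have Spos: "0 < x \<bullet> (S *v x)" if "x \<noteq> 0" for x
  proof -
    define d where "d = Z0 *v x + K *v x"
    have "0 < qf A B C D x (Z0 *v x)" using Z0 that ZP by auto
    also have "qf A B C D x (Z0 *v x) = qf A B C D (0 + x) (d - K *v x)" by (simp add: d_def)
    also have "\<dots> = d \<bullet> (D *v d) + x \<bullet> (S *v x)" unfolding expand by (simp add: qf_def)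
    also have "d \<bullet> (D *v d) \<le> 0"
      using nsdD unfolding nsd_def psd_def by (metis neg_mv inner_minus_right neg_0_le_iff_le)
    finally show ?thesis by simp
  qed
  have Spsd: "0 \<le> x \<bullet> (S *v x)" for x
    using Spos[of x] by (cases "x = 0") auto
  show ?thesis
  proof
    show "(\<lambda>Z. Z ** W) ` Zplus P \<subseteq> Zplus (blockmat (transpose W ** blk11 P ** W) (transpose W ** blk12 P)
                         (blk21 P ** W) (blk22 P))"
    proof
      fix Y assume "Y \<in> (\<lambda>Z. Z ** W) ` Zplus P"
      then obtain Z where Z: "Z \<in> Zplus P" and Y: "Y = Z ** W" by auto
      have "Y \<in> Zplus PW" unfolding ZPW
      proof (intro allI impI)
        fix u :: "real^'p" assume "u \<noteq> 0"
        then have "W *v u \<noteq> 0" using injW by auto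
        then show "0 < qf A B C D (W *v u) (Y *v u)"
          using Z unfolding ZP Y by (simp add: matrix_vector_mul_assoc[symmetric])
      qed
      then show "Y \<in> Zplus (blockmat (transpose W ** blk11 P ** W) (transpose W ** blk12 P)
                         (blk21 P ** W) (blk22 P))" unfolding PW_def A_def B_def C_def D_def .
    qed
  next
    show "Zplus (blockmat (transpose W ** blk11 P ** W) (transpose W ** blk12 P)
                         (blk21 P ** W) (blk22 P)) \<subseteq> (\<lambda>Z. Z ** W) ` Zplus P"
    proof
      fix Y assume "Y \<in> Zplus (blockmat (transpose W ** blk11 P ** W) (transpose W ** blk12 P)
                         (blk21 P ** W) (blk22 P))"
      then have Y: "Y \<in> Zplus PW" unfolding PW_def A_def B_def C_def D_def .
      define G where "G = transpose W ** S ** W"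
      have Gq: "u \<bullet> (G *v u) = (W *v u) \<bullet> (S *v (W *v u))" for u
        unfolding G_def by (simp add: matrix_vector_mul_assoc[symmetric] tw2)
      have "inj ((*v) G)"
      proof (rule linear_injective_0[THEN iffD2])
        show "linear ((*v) G)" by (rule matrix_vector_mul_linear)
        show "\<forall>u. G *v u = 0 \<longrightarrow> u = 0"
        proof (intro allI impI)
          fix u assume "G *v u = 0"
          then have "(W *v u) \<bullet> (S *v (W *v u)) = 0" using Gq[of u] by simp
          then have "W *v u = 0" using Spos by fastforce
          then show "u = 0" by (rule injW)
        qed
      qed
      then obtain Gi where GiG: "Gi ** G = mat 1"
        using matrix_left_invertible_injective by blast
      then have GGi: "G ** Gi = mat 1" using matrix_left_right_inverse by blast
      define E where "E = Gi ** transpose W ** S"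
      define Z where "Z = (Y + K ** W) ** E - K"
      have EW: "E *v (W *v u) = u" for u
      proof -
        have "E *v (W *v u) = (Gi ** G) *v u"
          unfolding E_def G_def by (simp add: matrix_vector_mul_assoc matrix_mul_assoc)
        then show ?thesis using GiG by simp
      qed
      have ZW: "Z ** W = Y"
        unfolding matrix_eq
      proof
        fix u
        show "(Z ** W) *v u = Y *v u"
          unfolding Z_def
          by (simp add: matrix_vector_mul_assoc[symmetric] matrix_vector_mult_diff_rdistrib
               matrix_vector_mult_add_rdistrib EW)
      qed
      have "Z \<in> Zplus P" unfolding ZP
      proof (intro allI impI)
        fix x :: "real^'q" assume x0: "x \<noteq> 0"
        define u where "u = E *v x"
        define v where "v = x - W *v u"
        have xe: "x = W *v u + v" by (simp add: v_def)
        have Zx: "Z *v x = Y *v u - K *v v"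
          by (simp add: Z_def u_def v_def matrix_vector_mul_assoc[symmetric]
               matrix_vector_mult_diff_rdistrib matrix_vector_mult_add_rdistrib
               matrix_vector_mult_diff_distrib)
        have orth: "transpose W *v (S *v v) = 0"
        proof -
          have "transpose W *v (S *v (W *v u)) = (G ** Gi) *v (transpose W *v (S *v x))"
            unfolding u_def E_def G_def by (simp add: matrix_vector_mul_assoc matrix_mul_assoc)
          then show ?thesis using GGi
            by (simp add: v_def matrix_vector_mult_diff_distrib)
        qed
        have cross: "(W *v u) \<bullet> (S *v v) = 0"
          using tw[of u W "S *v v"] orth by simp
        have "qf A B C D x (Z *v x) = qf A B C D (W *v u) (Y *v u) + v \<bullet> (S *v v)"
        proof -
          have "qf A B C D x (Z *v x) = qf A B C D (W *v u + v) (Y *v u - K *v v)"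
            using Zx xe by simp
          also have "\<dots> = qf A B C D (W *v u) (Y *v u) + v \<bullet> (S *v v)"
            unfolding expand cross by simp
          finally show ?thesis .
        qed
        moreover have "0 < qf A B C D (W *v u) (Y *v u) + v \<bullet> (S *v v)"
        proof (cases "u = 0")
          case True
          then have "v = x" by (simp add: v_def)
          then show ?thesis using True Spos[OF x0] by (simp add: qf_def)
        next
          case False
          then show ?thesis using Y ZPW Spsd[of v] by (meson add_pos_nonneg)
        qed
        ultimately show "0 < qf A B C D x (Z *v x)" by simp
      qed
      then show "Y \<in> (\<lambda>Z. Z ** W) ` Zplus P" using ZW by force
    qed
  qed
qed

end
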